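(* Let $G$ be a Tutte-Berge graph and $U\subseteq V(G)$. Let $G_1$ and $G_2$ be the induced subgraphs of $G$ on $U$ and on $V(G)\setminus U$, respectively. Assume there is a maximum matching $M$ of $G$ and a partition $M=M_1\cup M_2$ with all edges of $M_1$ in $G_1$ and all edges of $M_2$ in $G_2$. Then $G_1$ and $G_2$ are Tutte-Berge graphs.
   Context: $\nu(G)$ is the matching number of $G$. For $U\subseteq V(G)$, $N_G(U)$ is the set of vertices adjacent to at least one vertex of $U$. $G$ is a Tutte-Berge graph if there exists an independent set $T$ of $G$ with $|T| = |N_G(T)| + |V(G)| - 2\nu(G)$. *)

theory Defs
  imports Main
begin

definition graph :: "'a set \<Rightarrow> 'a set set \<Rightarrow> bool" where
  "graph V E \<longleftrightarrow> finite V \<and> (\<forall>e\<in>E. e \<subseteq> V \<and> card e = 2)"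

definition matching :: "'a set set \<Rightarrow> 'a set set \<Rightarrow> bool" where
  "matching E M \<longleftrightarrow> M \<subseteq> E \<and> (\<forall>e1\<in>M. \<forall>e2\<in>M. e1 \<noteq> e2 \<longrightarrow> e1 \<inter> e2 = {})"

definition matching_number :: "'a set set \<Rightarrow> nat" where
  "matching_number E = Max {card M | M. matching E M}"

definition max_matching :: "'a set set \<Rightarrow> 'a set set \<Rightarrow> bool" where
  "max_matching E M \<longleftrightarrow> matching E M \<and> card M = matching_number E"

definition neighbourhood :: "'a set set \<Rightarrow> 'a set \<Rightarrow> 'a set" where
  "neighbourhood E U = {v. \<exists>u\<in>U. {u, v} \<in> E}"

definition independent :: "'a set set \<Rightarrow> 'a set \<Rightarrow> bool" where
  "independent E T \<longleftrightarrow> (\<forall>u\<in>T. \<forall>v\<in>T. {u, v} \<notin> E)"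

definition tutte_berge_graph :: "'a set \<Rightarrow> 'a set set \<Rightarrow> bool" where
  "tutte_berge_graph V E \<longleftrightarrow>
     (\<exists>T. T \<subseteq> V \<and> independent E T \<and>
          int (card T) = int (card (neighbourhood E T)) + int (card V) - 2 * int (matching_number E))"

definition induced_edges :: "'a set set \<Rightarrow> 'a set \<Rightarrow> 'a set set" where
  "induced_edges E U = {e \<in> E. e \<subseteq> U}"

end

theory Submission
  imports Defs
begin

lemma fin_E: "graph V E \<Longrightarrow> finite E"
  unfolding graph_def by (meson Pow_iff finite_Pow_iff finite_subset subsetI)

lemma key:
  assumes G: "graph V E" and TV: "T \<subseteq> V" and ind: "independent E T" and mat: "matching E M"
  shows "card T + 2 * card M \<le> card (neighbourhood E T) + card V"
proof -
  have finV: "finite V" using G by (simp add: graph_def)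
  have finE: "finite E" using fin_E[OF G] .
  have ME: "M \<subseteq> E" using mat by (simp add: matching_def)
  have finM: "finite M" using finE ME finite_subset by blast
  have dis: "\<And>e1 e2. e1 \<in> M \<Longrightarrow> e2 \<in> M \<Longrightarrow> e1 \<noteq> e2 \<Longrightarrow> e1 \<inter> e2 = {}"
    using mat by (simp add: matching_def)
  have edge: "\<And>e. e \<in> M \<Longrightarrow> e \<subseteq> V \<and> card e = 2" using G ME by (auto simp: graph_def)
  have finT: "finite T" using finV TV finite_subset by blast
  have fe: "\<And>e. e \<in> M \<Longrightarrow> finite e" using edge by (metis card.infinite zero_neq_numeral)
  have UMV: "\<Union>M \<subseteq> V" using edge by blast
  have cU: "card (\<Union>M) = 2 * card M"
  proof -
    have "card (\<Union>M) = sum card M"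
      proof (rule card_Union_disjoint)
      show "pairwise disjnt M" using dis by (auto simp: pairwise_def disjnt_def)
      fix A assume "A \<in> M" then show "finite A" using edge by (metis card.infinite zero_neq_numeral)
    qed
    also have "\<dots> = sum (\<lambda>_. 2) M" using edge by simp
    finally show ?thesis by simp
  qed
  have finUM: "finite (\<Union>M)" using UMV finV finite_subset by blast
  have cD: "card (V - \<Union>M) = card V - 2 * card M"
    using card_Diff_subset[OF finUM UMV] cU by simp
  have le2: "2 * card M \<le> card V" using card_mono[OF finV UMV] cU by simp
  define MT where "MT = {e \<in> M. e \<inter> T \<noteq> {}}"
  have finMT: "finite MT" using finM MT_def by simp
  have shape: "\<And>e. e \<in> MT \<Longrightarrow> \<exists>a b. e = {a, b} \<and> a \<noteq> b \<and> a \<in> T \<and> b \<notin> T \<and> {a,b} \<in> E"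
  proof -
    fix e assume e: "e \<in> MT"
    then have eM: "e \<in> M" and eT: "e \<inter> T \<noteq> {}" by (auto simp: MT_def)
    obtain x y where xy: "e = {x, y}" "x \<noteq> y" using edge[OF eM] card_2_iff by metis
    have eE: "e \<in> E" using eM ME by blast
    show "\<exists>a b. e = {a, b} \<and> a \<noteq> b \<and> a \<in> T \<and> b \<notin> T \<and> {a,b} \<in> E"
    proof (cases "x \<in> T")
      case True
      then have "y \<notin> T" using ind eE xy unfolding independent_def by blast
      then show ?thesis using True xy eE by blast
    next
      case False
      then have "y \<in> T" using eT xy by blast
      then show ?thesis using False xy eE by (metis insert_commute)
    qed
  qed
  have c1: "card (\<Union>((\<lambda>e. e \<inter> T) ` MT)) = card MT"
  proof -
    have "card (\<Union>((\<lambda>e. e \<inter> T) ` MT)) = (\<Sum>e\<in>MT. card (e \<inter> T))"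
      by (rule card_UN_disjoint) (use finMT dis fe in \<open>auto simp: MT_def\<close>)
    also have "\<dots> = (\<Sum>e\<in>MT. 1)"
    proof (rule sum.cong)
      fix e assume "e \<in> MT"
      then obtain a b where "e = {a, b}" "a \<noteq> b" "a \<in> T" "b \<notin> T" using shape by blast
      then have "e \<inter> T = {a}" by auto
      then show "card (e \<inter> T) = 1" by simp
    qed simp
    finally show ?thesis by simp
  qed
  have c2: "card (\<Union>((\<lambda>e. e - T) ` MT)) = card MT"
  proof -
    have "card (\<Union>((\<lambda>e. e - T) ` MT)) = (\<Sum>e\<in>MT. card (e - T))"
      by (rule card_UN_disjoint) (use finMT dis fe in \<open>auto simp: MT_def\<close>)
    also have "\<dots> = (\<Sum>e\<in>MT. 1)"
    proof (rule sum.cong)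
      fix e assume "e \<in> MT"
      then obtain a b where "e = {a, b}" "a \<noteq> b" "a \<in> T" "b \<notin> T" using shape by blast
      then have "e - T = {b}" by auto
      then show "card (e - T) = 1" by simp
    qed simp
    finally show ?thesis by simp
  qed
  have s1: "T \<inter> \<Union>M = \<Union>((\<lambda>e. e \<inter> T) ` MT)" by (auto simp: MT_def)
  have s2: "\<Union>((\<lambda>e. e - T) ` MT) \<subseteq> neighbourhood E T"
  proof
    fix v assume "v \<in> \<Union>((\<lambda>e. e - T) ` MT)"
    then obtain e where e: "e \<in> MT" "v \<in> e" "v \<notin> T" by blast
    then obtain a b where "e = {a, b}" "a \<noteq> b" "a \<in> T" "b \<notin> T" "{a,b} \<in> E" using shape by blast
    then show "v \<in> neighbourhood E T" using e unfolding neighbourhood_def by blast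
  qed
  have finN: "finite (neighbourhood E T)"
  proof -
    have "neighbourhood E T \<subseteq> V" using G unfolding neighbourhood_def graph_def by blast
    then show ?thesis using finV finite_subset by blast
  qed
  have a1: "card (T \<inter> \<Union>M) \<le> card (neighbourhood E T)"
    using s1 c1 c2 card_mono[OF finN s2] by simp
  have a2: "card (T - \<Union>M) \<le> card (V - \<Union>M)"
    by (rule card_mono) (use finV TV in auto)
  have "card T = card (T \<inter> \<Union>M) + card (T - \<Union>M)" using card_Int_Diff[OF finT] by blast
  then show ?thesis using a1 a2 cD le2 by linarith
qed

lemma mn_ge:
  assumes "graph V E" "matching E M" shows "card M \<le> matching_number E"
proof -
  have "finite {card M | M. matching E M}"
  proof -
    have "{card M | M. matching E M} \<subseteq> card ` Pow E" by (auto simp: matching_def)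
    then show ?thesis using fin_E[OF assms(1)] finite_subset by blast
  qed
  then show ?thesis unfolding matching_number_def using assms(2) by (auto intro: Max_ge)
qed

lemma mn_ex:
  assumes "graph V E" shows "\<exists>M. matching E M \<and> card M = matching_number E"
proof -
  have fin: "finite {card M | M. matching E M}"
  proof -
    have "{card M | M. matching E M} \<subseteq> card ` Pow E" by (auto simp: matching_def)
    then show ?thesis using fin_E[OF assms(1)] finite_subset by blast
  qed
  have "matching E {}" by (simp add: matching_def)
  then have "{card M | M. matching E M} \<noteq> {}" by blast
  from Max_in[OF fin this] show ?thesis unfolding matching_number_def by auto
qed

lemma induced_graph: "graph V E \<Longrightarrow> W \<subseteq> V \<Longrightarrow> graph W (induced_edges E W)"
  unfolding graph_def induced_edges_def using finite_subset by blast

lemma nb_sub: "neighbourhood (induced_edges E W) S \<subseteq> W \<inter> neighbourhood E S"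
  unfolding neighbourhood_def induced_edges_def by auto

theorem lemma2p8:
  fixes V U :: "'a set" and E M M1 M2 :: "'a set set"
  assumes "graph V E"
    and "tutte_berge_graph V E"
    and "U \<subseteq> V"
    and "max_matching E M"
    and "M = M1 \<union> M2"
    and "M1 \<inter> M2 = {}"
    and "M1 \<subseteq> induced_edges E U"
    and "M2 \<subseteq> induced_edges E (V - U)"
  shows "tutte_berge_graph U (induced_edges E U) \<and>
         tutte_berge_graph (V - U) (induced_edges E (V - U))"
proof -
  note G = assms(1)
  define E1 where "E1 = induced_edges E U"
  define E2 where "E2 = induced_edges E (V - U)"
  have G1: "graph U E1" using induced_graph[OF G assms(3)] E1_def by simp
  have G2: "graph (V - U) E2" using induced_graph[OF G, of "V - U"] E2_def by auto
  obtain T where T: "T \<subseteq> V" "independent E T"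
    "int (card T) = int (card (neighbourhood E T)) + int (card V) - 2 * int (matching_number E)"
    using assms(2) unfolding tutte_berge_graph_def by blast
  have finV: "finite V" using G by (simp add: graph_def)
  have finE: "finite E" using fin_E[OF G] .
  have matM: "matching E M" and cM: "card M = matching_number E"
    using assms(4) by (auto simp: max_matching_def)
  have finM: "finite M" using matM finE by (meson matching_def finite_subset)
  have m1: "matching E1 M1" using matM assms(5,7) unfolding matching_def E1_def by blast
  have m2: "matching E2 M2" using matM assms(5,8) unfolding matching_def E2_def by blast
  have cMs: "card M = card M1 + card M2"
    using assms(5,6) finM card_Un_disjoint by (metis finite_Un)
  define T1 where "T1 = T \<inter> U"
  define T2 where "T2 = T - U"
  have i1: "independent E1 T1" using T(2) unfolding independent_def E1_def induced_edges_def T1_def by blast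
  have i2: "independent E2 T2" using T(2) unfolding independent_def E2_def induced_edges_def T2_def by blast
  obtain N1 where n1: "matching E1 N1" "card N1 = matching_number E1" using mn_ex[OF G1] by blast
  obtain N2 where n2: "matching E2 N2" "card N2 = matching_number E2" using mn_ex[OF G2] by blast
  have k1: "card T1 + 2 * card N1 \<le> card (neighbourhood E1 T1) + card U"
    by (rule key[OF G1 _ i1 n1(1)]) (simp add: T1_def)
  have k2: "card T2 + 2 * card N2 \<le> card (neighbourhood E2 T2) + card (V - U)"
    by (rule key[OF G2 _ i2 n2(1)]) (use T(1) in \<open>auto simp: T2_def\<close>)
  have g1: "card M1 \<le> matching_number E1" by (rule mn_ge[OF G1 m1])
  have g2: "card M2 \<le> matching_number E2" by (rule mn_ge[OF G2 m2])
  have finT: "finite T" using T(1) finV finite_subset by blast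
  have cT: "card T = card T1 + card T2" unfolding T1_def T2_def using card_Int_Diff[OF finT] by blast
  have cV: "card V = card U + card (V - U)"
    using card_Diff_subset[OF finite_subset[OF assms(3) finV] assms(3)] card_mono[OF finV assms(3)] by simp
  have finN: "finite (neighbourhood E T)"
  proof -
    have "neighbourhood E T \<subseteq> V" using G unfolding neighbourhood_def graph_def by blast
    then show ?thesis using finV finite_subset by blast
  qed
  have sN1: "neighbourhood E1 T1 \<subseteq> U \<inter> neighbourhood E T"
    using nb_sub[of E U T1] unfolding E1_def T1_def neighbourhood_def by blast
  have sN2: "neighbourhood E2 T2 \<subseteq> (V - U) \<inter> neighbourhood E T"
    using nb_sub[of E "V - U" T2] unfolding E2_def T2_def neighbourhood_def by blast
  have cN: "card (neighbourhood E1 T1) + card (neighbourhood E2 T2) \<le> card (neighbourhood E T)"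
  proof -
    have "card (neighbourhood E1 T1 \<union> neighbourhood E2 T2) = card (neighbourhood E1 T1) + card (neighbourhood E2 T2)"
      by (rule card_Un_disjoint) (use sN1 sN2 finN finite_subset in blast)+
    moreover have "card (neighbourhood E1 T1 \<union> neighbourhood E2 T2) \<le> card (neighbourhood E T)"
      by (rule card_mono[OF finN]) (use sN1 sN2 in blast)
    ultimately show ?thesis by simp
  qed
  have e1: "int (card T1) = int (card (neighbourhood E1 T1)) + int (card U) - 2 * int (matching_number E1)"
    using k1 k2 g1 g2 cM cMs T(3) cT cV cN n1(2) n2(2) by linarith
  have e2: "int (card T2) = int (card (neighbourhood E2 T2)) + int (card (V - U)) - 2 * int (matching_number E2)"
    using k1 k2 g1 g2 cM cMs T(3) cT cV cN n1(2) n2(2) by linarith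
  have "tutte_berge_graph U E1" unfolding tutte_berge_graph_def
    by (rule exI[of _ T1]) (use e1 i1 in \<open>simp add: T1_def\<close>)
  moreover have "tutte_berge_graph (V - U) E2" unfolding tutte_berge_graph_def
    by (rule exI[of _ T2]) (use e2 i2 T(1) in \<open>simp add: T2_def Diff_mono\<close>)
  ultimately show ?thesis unfolding E1_def E2_def by simp
qed

end
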